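(* Let $\Re_1,\Re_2$ be commutative Krasner hyperrings with identity, $\varphi_i:L(\Re_i)\to L(\Re_i)\cup\{\emptyset\}$ functions ($i=1,2$), $\Re=\Re_1\times\Re_2$, and $\phi=\varphi_1\times\varphi_2$, i.e. $\phi(N_1\times N_2)=\varphi_1(N_1)\times\varphi_2(N_2)$. Then a proper hyperideal $N$ of $\Re$ is $\phi$-prime if and only if $N$ is of one of the following types: (i) $N=N_1\times N_2$ where $N_i$ is a proper hyperideal of $\Re_i$ with $\varphi_i(N_i)=N_i$ ($i=1,2$); (ii) $N=N_1\times\Re_2$ where $N_1$ is a proper $\varphi_1$-prime hyperideal of $\Re_1$, which must be prime if $\varphi_2(\Re_2)\ne\Re_2$; (iii) $N=\Re_1\times N_2$ where $N_2$ is a proper $\varphi_2$-prime hyperideal of $\Re_2$, which must be prime if $\varphi_1(\Re_1)\ne\Re_1$.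
   Context: Krasner hyperring: $(\Re,\oplus)$ canonical hypergroup, $(\Re,\circ)$ commutative semigroup with identity $1\ne0$, $0$ absorbing, distributive. Hyperideals and $L(\Re)$ as usual. $\Re_1\times\Re_2$ has componentwise operations and every hyperideal has the form $N_1\times N_2$ with $N_i\in L(\Re_i)$; a product with $\emptyset$ is $\emptyset$. A hyperideal $N$ is $\psi$-prime if $a\circ b\in N$, $a\circ b\notin\psi(N)$ imply $a\in N$ or $b\in N$; prime if $a\circ b\in N$ implies $a\in N$ or $b\in N$. *)

theory Defs
  imports Main
begin

record 'a hyperring =
  carrier :: "'a set"
  hadd :: "'a \<Rightarrow> 'a \<Rightarrow> 'a set"
  hmul :: "'a \<Rightarrow> 'a \<Rightarrow> 'a"
  hzero :: "'a"
  hone :: "'a"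

definition hadd_set :: "('a, 'b) hyperring_scheme \<Rightarrow> 'a set \<Rightarrow> 'a \<Rightarrow> 'a set" where
  "hadd_set R A z = (\<Union>a\<in>A. hadd R a z)"

definition hadd_set_r :: "('a, 'b) hyperring_scheme \<Rightarrow> 'a \<Rightarrow> 'a set \<Rightarrow> 'a set" where
  "hadd_set_r R x A = (\<Union>a\<in>A. hadd R x a)"

definition hneg :: "('a, 'b) hyperring_scheme \<Rightarrow> 'a \<Rightarrow> 'a" where
  "hneg R x = (THE y. y \<in> carrier R \<and> hzero R \<in> hadd R x y)"

definition canonical_hypergroup :: "('a, 'b) hyperring_scheme \<Rightarrow> bool" where
  "canonical_hypergroup R \<longleftrightarrow>
     (\<forall>x\<in>carrier R. \<forall>y\<in>carrier R. hadd R x y \<subseteq> carrier R \<and> hadd R x y \<noteq> {}) \<and>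
     (\<forall>x\<in>carrier R. \<forall>y\<in>carrier R. \<forall>z\<in>carrier R.
        hadd_set R (hadd R x y) z = hadd_set_r R x (hadd R y z)) \<and>
     (\<forall>x\<in>carrier R. \<forall>y\<in>carrier R. hadd R x y = hadd R y x) \<and>
     hzero R \<in> carrier R \<and>
     (\<forall>x\<in>carrier R. hadd R (hzero R) x = {x}) \<and>
     (\<forall>x\<in>carrier R. \<exists>!y. y \<in> carrier R \<and> hzero R \<in> hadd R x y) \<and>
     (\<forall>x\<in>carrier R. \<forall>y\<in>carrier R. \<forall>z\<in>carrier R.
        z \<in> hadd R x y \<longrightarrow> x \<in> hadd R z (hneg R y) \<and> y \<in> hadd R (hneg R x) z)"

definition krasner_hyperring :: "('a, 'b) hyperring_scheme \<Rightarrow> bool" where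
  "krasner_hyperring R \<longleftrightarrow>
     canonical_hypergroup R \<and>
     (\<forall>x\<in>carrier R. \<forall>y\<in>carrier R. hmul R x y \<in> carrier R) \<and>
     (\<forall>x\<in>carrier R. \<forall>y\<in>carrier R. \<forall>z\<in>carrier R.
        hmul R (hmul R x y) z = hmul R x (hmul R y z)) \<and>
     (\<forall>x\<in>carrier R. \<forall>y\<in>carrier R. hmul R x y = hmul R y x) \<and>
     hone R \<in> carrier R \<and> hone R \<noteq> hzero R \<and>
     (\<forall>x\<in>carrier R. hmul R (hone R) x = x) \<and>
     (\<forall>x\<in>carrier R. hmul R (hzero R) x = hzero R) \<and>
     (\<forall>x\<in>carrier R. \<forall>y\<in>carrier R. \<forall>z\<in>carrier R.
        hmul R x ` hadd R y z = hadd R (hmul R x y) (hmul R x z))"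

text \<open>Hyperideals; \<open>hyperideals R\<close> is \<open>L(R)\<close>.\<close>
definition hyperideal :: "('a, 'b) hyperring_scheme \<Rightarrow> 'a set \<Rightarrow> bool" where
  "hyperideal R I \<longleftrightarrow>
     I \<subseteq> carrier R \<and> I \<noteq> {} \<and>
     (\<forall>a\<in>I. \<forall>b\<in>I. hadd R a (hneg R b) \<subseteq> I) \<and>
     (\<forall>r\<in>carrier R. \<forall>a\<in>I. hmul R r a \<in> I)"

definition hyperideals :: "('a, 'b) hyperring_scheme \<Rightarrow> 'a set set" where
  "hyperideals R = {I. hyperideal R I}"

definition psi_prime :: "('a, 'b) hyperring_scheme \<Rightarrow> ('a set \<Rightarrow> 'a set) \<Rightarrow> 'a set \<Rightarrow> bool" where
  "psi_prime R \<psi> N \<longleftrightarrow> hyperideal R N \<and>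
     (\<forall>a\<in>carrier R. \<forall>b\<in>carrier R.
        hmul R a b \<in> N \<longrightarrow> hmul R a b \<notin> \<psi> N \<longrightarrow> a \<in> N \<or> b \<in> N)"

definition prime_hyperideal :: "('a, 'b) hyperring_scheme \<Rightarrow> 'a set \<Rightarrow> bool" where
  "prime_hyperideal R N \<longleftrightarrow> hyperideal R N \<and>
     (\<forall>a\<in>carrier R. \<forall>b\<in>carrier R. hmul R a b \<in> N \<longrightarrow> a \<in> N \<or> b \<in> N)"

definition prod_hyperring ::
  "('a, 'c) hyperring_scheme \<Rightarrow> ('b, 'd) hyperring_scheme \<Rightarrow> ('a \<times> 'b) hyperring" where
  "prod_hyperring R1 R2 =
    \<lparr> carrier = carrier R1 \<times> carrier R2,
      hadd = (\<lambda>x y. hadd R1 (fst x) (fst y) \<times> hadd R2 (snd x) (snd y)),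
      hmul = (\<lambda>x y. (hmul R1 (fst x) (fst y), hmul R2 (snd x) (snd y))),
      hzero = (hzero R1, hzero R2),
      hone = (hone R1, hone R2) \<rparr>"

text \<open>\<open>\<phi> = \<phi>1 \<times> \<phi>2\<close>: \<open>\<phi>(N1 \<times> N2) = \<phi>1(N1) \<times> \<phi>2(N2)\<close> (every hyperideal of the
product is of the form \<open>N1 \<times> N2\<close>, with \<open>N1 = fst ` N\<close>, \<open>N2 = snd ` N\<close>).\<close>
definition phi_prod :: "('a set \<Rightarrow> 'a set) \<Rightarrow> ('b set \<Rightarrow> 'b set) \<Rightarrow> ('a \<times> 'b) set \<Rightarrow> ('a \<times> 'b) set" where
  "phi_prod \<phi>1 \<phi>2 N = \<phi>1 (fst ` N) \<times> \<phi>2 (snd ` N)"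

end

theory Submission
  imports Defs
begin

lemma prod_simps[simp]:
  "carrier (prod_hyperring R1 R2) = carrier R1 \<times> carrier R2"
  "hadd (prod_hyperring R1 R2) x y = hadd R1 (fst x) (fst y) \<times> hadd R2 (snd x) (snd y)"
  "hmul (prod_hyperring R1 R2) x y = (hmul R1 (fst x) (fst y), hmul R2 (snd x) (snd y))"
  "hzero (prod_hyperring R1 R2) = (hzero R1, hzero R2)"
  "hone (prod_hyperring R1 R2) = (hone R1, hone R2)"
  by (simp_all add: prod_hyperring_def)

lemma hneg_in:
  assumes "canonical_hypergroup R" "x \<in> carrier R"
  shows "hneg R x \<in> carrier R \<and> hzero R \<in> hadd R x (hneg R x)"
proof -
  from assms have "\<exists>!y. y \<in> carrier R \<and> hzero R \<in> hadd R x y"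
    by (simp add: canonical_hypergroup_def)
  then show ?thesis unfolding hneg_def by (rule theI')
qed

lemma hneg_eq:
  assumes "canonical_hypergroup R" "x \<in> carrier R" "y \<in> carrier R" "hzero R \<in> hadd R x y"
  shows "hneg R x = y"
proof -
  from assms have "\<exists>!y. y \<in> carrier R \<and> hzero R \<in> hadd R x y"
    by (simp add: canonical_hypergroup_def)
  then show ?thesis unfolding hneg_def by (rule the1_equality) (use assms in blast)
qed

lemma can_parts_1: assumes "canonical_hypergroup R" shows "\<forall>x\<in>carrier R. \<forall>y\<in>carrier R. hadd R x y \<subseteq> carrier R \<and> hadd R x y \<noteq> {}"
  using assms unfolding canonical_hypergroup_def by (elim conjE) assumption

lemma can_parts_2: assumes "canonical_hypergroup R" shows "\<forall>x\<in>carrier R. \<forall>y\<in>carrier R. hadd R x y = hadd R y x"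
  using assms unfolding canonical_hypergroup_def by (elim conjE) assumption

lemma can_parts_3: assumes "canonical_hypergroup R" shows "hzero R \<in> carrier R"
  using assms unfolding canonical_hypergroup_def by (elim conjE) assumption

lemma can_parts_4: assumes "canonical_hypergroup R" shows "\<forall>x\<in>carrier R. hadd R (hzero R) x = {x}"
  using assms unfolding canonical_hypergroup_def by (elim conjE) assumption

lemma can_zero: "canonical_hypergroup R \<Longrightarrow> hzero R \<in> carrier R"
  by (rule can_parts_3)

lemma can_zero_add: "canonical_hypergroup R \<Longrightarrow> x \<in> carrier R \<Longrightarrow> hadd R (hzero R) x = {x}"
  using can_parts_4 by blast

lemma can_comm: "canonical_hypergroup R \<Longrightarrow> x \<in> carrier R \<Longrightarrow> y \<in> carrier R \<Longrightarrow> hadd R x y = hadd R y x"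
  using can_parts_2 by blast

lemma can_closed: "canonical_hypergroup R \<Longrightarrow> x \<in> carrier R \<Longrightarrow> y \<in> carrier R \<Longrightarrow> hadd R x y \<subseteq> carrier R"
  using can_parts_1 by blast

lemma can_add_zero: "canonical_hypergroup R \<Longrightarrow> x \<in> carrier R \<Longrightarrow> hadd R x (hzero R) = {x}"
  by (metis can_comm can_zero can_zero_add)

lemma hneg_zero: "canonical_hypergroup R \<Longrightarrow> hneg R (hzero R) = hzero R"
  by (rule hneg_eq) (auto simp: can_zero can_zero_add)

lemma hneg_hneg: "canonical_hypergroup R \<Longrightarrow> x \<in> carrier R \<Longrightarrow> hneg R (hneg R x) = x"
  by (rule hneg_eq) (auto simp: hneg_in can_comm)
lemma prod_hneg:
  assumes "canonical_hypergroup R1" "canonical_hypergroup R2" "x \<in> carrier R1" "y \<in> carrier R2"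
  shows "hneg (prod_hyperring R1 R2) (x, y) = (hneg R1 x, hneg R2 y)"
proof -
  have "(THE z. z \<in> carrier R1 \<times> carrier R2 \<and> (hzero R1, hzero R2) \<in> hadd R1 x (fst z) \<times> hadd R2 y (snd z))
        = (hneg R1 x, hneg R2 y)"
  proof (rule the_equality)
    show "(hneg R1 x, hneg R2 y) \<in> carrier R1 \<times> carrier R2 \<and>
      (hzero R1, hzero R2) \<in> hadd R1 x (fst (hneg R1 x, hneg R2 y)) \<times> hadd R2 y (snd (hneg R1 x, hneg R2 y))"
      using hneg_in[OF assms(1,3)] hneg_in[OF assms(2,4)] by auto
  next
    fix z assume "z \<in> carrier R1 \<times> carrier R2 \<and> (hzero R1, hzero R2) \<in> hadd R1 x (fst z) \<times> hadd R2 y (snd z)"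
    then show "z = (hneg R1 x, hneg R2 y)"
      using hneg_eq[OF assms(1,3)] hneg_eq[OF assms(2,4)] by (cases z) auto
  qed
  then show ?thesis unfolding hneg_def by simp
qed

lemma kr_parts_1: assumes "krasner_hyperring R" shows "canonical_hypergroup R"
  using assms unfolding krasner_hyperring_def by (elim conjE) assumption

lemma kr_parts_2: assumes "krasner_hyperring R" shows "\<forall>x\<in>carrier R. \<forall>y\<in>carrier R. hmul R x y \<in> carrier R"
  using assms unfolding krasner_hyperring_def by (elim conjE) assumption

lemma kr_parts_3: assumes "krasner_hyperring R" shows "\<forall>x\<in>carrier R. \<forall>y\<in>carrier R. hmul R x y = hmul R y x"
  using assms unfolding krasner_hyperring_def by (elim conjE) assumption

lemma kr_parts_4: assumes "krasner_hyperring R" shows "hone R \<in> carrier R"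
  using assms unfolding krasner_hyperring_def by (elim conjE) assumption

lemma kr_parts_5: assumes "krasner_hyperring R" shows "\<forall>x\<in>carrier R. hmul R (hone R) x = x"
  using assms unfolding krasner_hyperring_def by (elim conjE) assumption

lemma kr_parts_6: assumes "krasner_hyperring R" shows "\<forall>x\<in>carrier R. hmul R (hzero R) x = hzero R"
  using assms unfolding krasner_hyperring_def by (elim conjE) assumption

lemma kr_can: "krasner_hyperring R \<Longrightarrow> canonical_hypergroup R"
  by (rule kr_parts_1)

lemma kr_mul: "krasner_hyperring R \<Longrightarrow> x \<in> carrier R \<Longrightarrow> y \<in> carrier R \<Longrightarrow> hmul R x y \<in> carrier R"
  using kr_parts_2 by blast

lemma kr_one: "krasner_hyperring R \<Longrightarrow> hone R \<in> carrier R"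
  by (rule kr_parts_4)

lemma kr_one_mul: "krasner_hyperring R \<Longrightarrow> x \<in> carrier R \<Longrightarrow> hmul R (hone R) x = x"
  using kr_parts_5 by blast

lemma kr_mul_comm: "krasner_hyperring R \<Longrightarrow> x \<in> carrier R \<Longrightarrow> y \<in> carrier R \<Longrightarrow> hmul R x y = hmul R y x"
  using kr_parts_3 by blast

lemma kr_mul_one: "krasner_hyperring R \<Longrightarrow> x \<in> carrier R \<Longrightarrow> hmul R x (hone R) = x"
  by (metis kr_mul_comm kr_one kr_one_mul)

lemma kr_zero_mul: "krasner_hyperring R \<Longrightarrow> x \<in> carrier R \<Longrightarrow> hmul R (hzero R) x = hzero R"
  using kr_parts_6 by blast

lemma kr_mul_zero: "krasner_hyperring R \<Longrightarrow> x \<in> carrier R \<Longrightarrow> hmul R x (hzero R) = hzero R"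
  by (metis kr_mul_comm kr_zero_mul kr_can can_zero)

lemma carrier_ideal:
  assumes "krasner_hyperring R" shows "hyperideal R (carrier R)"
proof -
  have C: "canonical_hypergroup R" using kr_can[OF assms] .
  have d: "\<forall>a\<in>carrier R. \<forall>b\<in>carrier R. hadd R a (hneg R b) \<subseteq> carrier R"
  proof (intro ballI)
    fix a b assume a: "a \<in> carrier R" and b: "b \<in> carrier R"
    have "hneg R b \<in> carrier R" using hneg_in[OF C b] by simp
    then show "hadd R a (hneg R b) \<subseteq> carrier R" by (rule can_closed[OF C a])
  qed
  have m: "\<forall>r\<in>carrier R. \<forall>a\<in>carrier R. hmul R r a \<in> carrier R"
    using kr_mul[OF assms] by simp
  have ne: "carrier R \<noteq> {}" using can_zero[OF C] by blast
  show ?thesis unfolding hyperideal_def using d m ne by simp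
qed

lemma one_in:
  assumes "krasner_hyperring R" "hyperideal R I" "hone R \<in> I" shows "I = carrier R"
proof
  show "I \<subseteq> carrier R" using assms(2) unfolding hyperideal_def by blast
  show "carrier R \<subseteq> I"
  proof
    fix r assume "r \<in> carrier R"
    then have "hmul R r (hone R) \<in> I" using assms(2,3) unfolding hyperideal_def by blast
    then show "r \<in> I" using kr_mul_one[OF assms(1) \<open>r \<in> carrier R\<close>] by simp
  qed
qed

lemma zero_in:
  assumes "krasner_hyperring R" "hyperideal R I" shows "hzero R \<in> I"
proof -
  obtain c where c: "c \<in> I" using assms(2) unfolding hyperideal_def by blast
  then have "c \<in> carrier R" using assms(2) unfolding hyperideal_def by blast
  have "hmul R (hzero R) c \<in> I" using assms(2) c can_zero[OF kr_can[OF assms(1)]]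
    unfolding hyperideal_def by blast
  then show ?thesis using kr_zero_mul[OF assms(1) \<open>c \<in> carrier R\<close>] by simp
qed


lemma ideal_sub: "hyperideal R I \<Longrightarrow> I \<subseteq> carrier R"
  unfolding hyperideal_def by blast

lemma ideal_diff: "hyperideal R I \<Longrightarrow> a \<in> I \<Longrightarrow> b \<in> I \<Longrightarrow> hadd R a (hneg R b) \<subseteq> I"
  unfolding hyperideal_def by blast

lemma ideal_mul: "hyperideal R I \<Longrightarrow> r \<in> carrier R \<Longrightarrow> a \<in> I \<Longrightarrow> hmul R r a \<in> I"
  unfolding hyperideal_def by blast

lemma ideal_decomp:
  assumes K1: "krasner_hyperring R1" and K2: "krasner_hyperring R2"
    and I: "hyperideal (prod_hyperring R1 R2) N"
  shows "N = fst ` N \<times> snd ` N"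
proof
  show "N \<subseteq> fst ` N \<times> snd ` N" by force
  have C1: "canonical_hypergroup R1" and C2: "canonical_hypergroup R2" using K1 K2 by (auto dest: kr_can)
  have sub: "N \<subseteq> carrier R1 \<times> carrier R2" using ideal_sub[OF I] by simp
  show "fst ` N \<times> snd ` N \<subseteq> N"
  proof
    fix p assume "p \<in> fst ` N \<times> snd ` N"
    then obtain a b c d where ab: "(a, b) \<in> N" and cd: "(c, d) \<in> N" and p: "p = (a, d)" by force
    have a: "a \<in> carrier R1" and b: "b \<in> carrier R2" using ab sub by auto
    have c: "c \<in> carrier R1" and d: "d \<in> carrier R2" using cd sub by auto
    have z1: "hzero R1 \<in> carrier R1" and z2: "hzero R2 \<in> carrier R2" using C1 C2 by (auto simp: can_zero)
    have o1: "hone R1 \<in> carrier R1" and o2: "hone R2 \<in> carrier R2" using K1 K2 by (auto simp: kr_one)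
    have "hmul (prod_hyperring R1 R2) (hone R1, hzero R2) (a, b) \<in> N"
      by (rule ideal_mul[OF I]) (use ab o1 z2 in auto)
    then have a0: "(a, hzero R2) \<in> N" using kr_one_mul[OF K1 a] kr_zero_mul[OF K2 b] by simp
    have "hmul (prod_hyperring R1 R2) (hzero R1, hone R2) (c, d) \<in> N"
      by (rule ideal_mul[OF I]) (use cd z1 o2 in auto)
    then have zd: "(hzero R1, d) \<in> N" using kr_one_mul[OF K2 d] kr_zero_mul[OF K1 c] by simp
    have "hadd (prod_hyperring R1 R2) (hzero R1, d) (hneg (prod_hyperring R1 R2) (hzero R1, d)) \<subseteq> N"
      by (rule ideal_diff[OF I zd zd])
    then have "hadd R1 (hzero R1) (hzero R1) \<times> hadd R2 d (hneg R2 d) \<subseteq> N"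
      using prod_hneg[OF C1 C2 z1 d] hneg_zero[OF C1] by simp
    then have zz: "(hzero R1, hzero R2) \<in> N" using hneg_in[OF C2 d] can_zero_add[OF C1 z1] by auto
    have "hadd (prod_hyperring R1 R2) (hzero R1, hzero R2) (hneg (prod_hyperring R1 R2) (hzero R1, d)) \<subseteq> N"
      by (rule ideal_diff[OF I zz zd])
    then have "hadd R1 (hzero R1) (hzero R1) \<times> hadd R2 (hzero R2) (hneg R2 d) \<subseteq> N"
      using prod_hneg[OF C1 C2 z1 d] hneg_zero[OF C1] by simp
    then have znd: "(hzero R1, hneg R2 d) \<in> N"
      using hneg_in[OF C2 d] can_zero_add[OF C1 z1] can_zero_add[OF C2] by auto
    have "hadd (prod_hyperring R1 R2) (a, hzero R2) (hneg (prod_hyperring R1 R2) (hzero R1, hneg R2 d)) \<subseteq> N"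
      by (rule ideal_diff[OF I a0 znd])
    then have "hadd R1 a (hzero R1) \<times> hadd R2 (hzero R2) d \<subseteq> N"
      using prod_hneg[OF C1 C2 z1, of "hneg R2 d"] hneg_in[OF C2 d] hneg_zero[OF C1] hneg_hneg[OF C2 d] by simp
    then show "p \<in> N" using p can_add_zero[OF C1 a] can_zero_add[OF C2 d] by simp
  qed
qed

lemma ideal_proj1:
  assumes K1: "krasner_hyperring R1" and K2: "krasner_hyperring R2"
    and I: "hyperideal (prod_hyperring R1 R2) (A \<times> B)" and B: "B \<noteq> {}"
  shows "hyperideal R1 A"
proof -
  have C1: "canonical_hypergroup R1" and C2: "canonical_hypergroup R2" using K1 K2 by (auto dest: kr_can)
  obtain c where c: "c \<in> B" using B by blast
  have sub: "A \<times> B \<subseteq> carrier R1 \<times> carrier R2" using ideal_sub[OF I] by simp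
  then have cc: "c \<in> carrier R2" using c I unfolding hyperideal_def by blast
  have s: "A \<subseteq> carrier R1" using sub c by blast
  have ne: "A \<noteq> {}" using I unfolding hyperideal_def by blast
  have d: "hadd R1 a (hneg R1 b) \<subseteq> A" if "a \<in> A" "b \<in> A" for a b
  proof -
    have "hadd (prod_hyperring R1 R2) (a, c) (hneg (prod_hyperring R1 R2) (b, c)) \<subseteq> A \<times> B"
      by (rule ideal_diff[OF I]) (use that c in auto)
    then have "hadd R1 a (hneg R1 b) \<times> hadd R2 c (hneg R2 c) \<subseteq> A \<times> B"
    proof -
      have "b \<in> carrier R1" using that s by blast
      then show ?thesis using prod_hneg[OF C1 C2 _ cc, of b] \<open>hadd (prod_hyperring R1 R2) (a, c) (hneg (prod_hyperring R1 R2) (b, c)) \<subseteq> A \<times> B\<close> by simp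
    qed
    moreover have "hadd R2 c (hneg R2 c) \<noteq> {}" using hneg_in[OF C2 cc] by blast
    ultimately show ?thesis by blast
  qed
  have m: "hmul R1 r a \<in> A" if "r \<in> carrier R1" "a \<in> A" for r a
  proof -
    have "hmul (prod_hyperring R1 R2) (r, hone R2) (a, c) \<in> A \<times> B"
      by (rule ideal_mul[OF I]) (use that c kr_one[OF K2] in auto)
    then show ?thesis by simp
  qed
  show ?thesis unfolding hyperideal_def using s ne d m by blast
qed

lemma ideal_proj2:
  assumes K1: "krasner_hyperring R1" and K2: "krasner_hyperring R2"
    and I: "hyperideal (prod_hyperring R1 R2) (A \<times> B)" and B: "A \<noteq> {}"
  shows "hyperideal R2 B"
proof -
  have C1: "canonical_hypergroup R1" and C2: "canonical_hypergroup R2" using K1 K2 by (auto dest: kr_can)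
  obtain c where c: "c \<in> A" using B by blast
  have sub: "A \<times> B \<subseteq> carrier R1 \<times> carrier R2" using ideal_sub[OF I] by simp
  then have cc: "c \<in> carrier R1" using c I unfolding hyperideal_def by blast
  have s: "B \<subseteq> carrier R2" using sub c by blast
  have ne: "B \<noteq> {}" using I unfolding hyperideal_def by blast
  have d: "hadd R2 a (hneg R2 b) \<subseteq> B" if "a \<in> B" "b \<in> B" for a b
  proof -
    have "hadd (prod_hyperring R1 R2) (c, a) (hneg (prod_hyperring R1 R2) (c, b)) \<subseteq> A \<times> B"
      by (rule ideal_diff[OF I]) (use that c in auto)
    then have "hadd R1 c (hneg R1 c) \<times> hadd R2 a (hneg R2 b) \<subseteq> A \<times> B"
    proof -
      have "b \<in> carrier R2" using that s by blast
      then show ?thesis using prod_hneg[OF C1 C2 cc, of b] \<open>hadd (prod_hyperring R1 R2) (c, a) (hneg (prod_hyperring R1 R2) (c, b)) \<subseteq> A \<times> B\<close> by simp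
    qed
    moreover have "hadd R1 c (hneg R1 c) \<noteq> {}" using hneg_in[OF C1 cc] by blast
    ultimately show ?thesis by blast
  qed
  have m: "hmul R2 r a \<in> B" if "r \<in> carrier R2" "a \<in> B" for r a
  proof -
    have "hmul (prod_hyperring R1 R2) (hone R1, r) (c, a) \<in> A \<times> B"
      by (rule ideal_mul[OF I]) (use that c kr_one[OF K1] in auto)
    then show ?thesis by simp
  qed
  show ?thesis unfolding hyperideal_def using s ne d m by blast
qed

theorem mainTheorem11:
  fixes R1 :: "'a hyperring" and R2 :: "'b hyperring"
    and \<phi>1 :: "'a set \<Rightarrow> 'a set" and \<phi>2 :: "'b set \<Rightarrow> 'b set"
    and N :: "('a \<times> 'b) set"
  assumes "krasner_hyperring R1" and "krasner_hyperring R2"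
    and "\<forall>I\<in>hyperideals R1. \<phi>1 I \<in> hyperideals R1 \<union> {{}}"
    and "\<forall>I\<in>hyperideals R2. \<phi>2 I \<in> hyperideals R2 \<union> {{}}"
    and "\<forall>I\<in>hyperideals R1. \<phi>1 I \<subseteq> I"
    and "\<forall>I\<in>hyperideals R2. \<phi>2 I \<subseteq> I"
    and "N \<in> hyperideals (prod_hyperring R1 R2)"
    and "N \<noteq> carrier (prod_hyperring R1 R2)"
  shows "psi_prime (prod_hyperring R1 R2) (phi_prod \<phi>1 \<phi>2) N \<longleftrightarrow>
     (\<exists>N1 N2. N = N1 \<times> N2 \<and> N1 \<in> hyperideals R1 \<and> N1 \<noteq> carrier R1 \<and>
        N2 \<in> hyperideals R2 \<and> N2 \<noteq> carrier R2 \<and> \<phi>1 N1 = N1 \<and> \<phi>2 N2 = N2) \<or>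
     (\<exists>N1. N = N1 \<times> carrier R2 \<and> N1 \<in> hyperideals R1 \<and> N1 \<noteq> carrier R1 \<and>
        psi_prime R1 \<phi>1 N1 \<and> (\<phi>2 (carrier R2) \<noteq> carrier R2 \<longrightarrow> prime_hyperideal R1 N1)) \<or>
     (\<exists>N2. N = carrier R1 \<times> N2 \<and> N2 \<in> hyperideals R2 \<and> N2 \<noteq> carrier R2 \<and>
        psi_prime R2 \<phi>2 N2 \<and> (\<phi>1 (carrier R1) \<noteq> carrier R1 \<longrightarrow> prime_hyperideal R2 N2))"
  proof -
  let ?P = "prod_hyperring R1 R2"
  note K1 = assms(1) and K2 = assms(2)
  have C1: "canonical_hypergroup R1" and C2: "canonical_hypergroup R2" using K1 K2 by (auto dest: kr_can)
  have o1: "hone R1 \<in> carrier R1" and o2: "hone R2 \<in> carrier R2" using K1 K2 by (auto simp: kr_one)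
  have z1: "hzero R1 \<in> carrier R1" and z2: "hzero R2 \<in> carrier R2" using C1 C2 by (auto simp: can_zero)
  have IN: "hyperideal ?P N" using assms(7) unfolding hyperideals_def by simp
  define N1 where "N1 = fst ` N"
  define N2 where "N2 = snd ` N"
  have NN: "N = N1 \<times> N2" unfolding N1_def N2_def by (rule ideal_decomp[OF K1 K2 IN])
  have ne: "N1 \<noteq> {}" "N2 \<noteq> {}" using IN NN unfolding hyperideal_def by auto
  have H1: "hyperideal R1 N1" using ideal_proj1[OF K1 K2 _ ne(2)] IN NN by simp
  have H2: "hyperideal R2 N2" using ideal_proj2[OF K1 K2 _ ne(1)] IN NN by simp
  have PSI: "phi_prod \<phi>1 \<phi>2 N = \<phi>1 N1 \<times> \<phi>2 N2" unfolding phi_prod_def N1_def N2_def ..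
  have S1: "N1 \<subseteq> carrier R1" and S2: "N2 \<subseteq> carrier R2" using H1 H2 by (auto dest: ideal_sub)
  have HC1: "carrier R1 \<in> hyperideals R1" and HC2: "carrier R2 \<in> hyperideals R2"
    using carrier_ideal[OF K1] carrier_ideal[OF K2] unfolding hyperideals_def by auto
  have one1: "hone R1 \<notin> \<phi>1 (carrier R1)" if "\<phi>1 (carrier R1) \<noteq> carrier R1"
  proof
    assume h: "hone R1 \<in> \<phi>1 (carrier R1)"
    then have "\<phi>1 (carrier R1) \<in> hyperideals R1" using assms(3) HC1 by auto
    then show False using one_in[OF K1 _ h] that unfolding hyperideals_def by auto
  qed
  have one2: "hone R2 \<notin> \<phi>2 (carrier R2)" if "\<phi>2 (carrier R2) \<noteq> carrier R2"
  proof
    assume h: "hone R2 \<in> \<phi>2 (carrier R2)"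
    then have "\<phi>2 (carrier R2) \<in> hyperideals R2" using assms(4) HC2 by auto
    then show False using one_in[OF K2 _ h] that unfolding hyperideals_def by auto
  qed
  show ?thesis (is "?lhs \<longleftrightarrow> ?rhs")
  proof
    assume PP: "psi_prime ?P (phi_prod \<phi>1 \<phi>2) N"
    then have PP': "\<And>a b. a \<in> carrier ?P \<Longrightarrow> b \<in> carrier ?P \<Longrightarrow> hmul ?P a b \<in> N \<Longrightarrow>
        hmul ?P a b \<notin> \<phi>1 N1 \<times> \<phi>2 N2 \<Longrightarrow> a \<in> N \<or> b \<in> N"
      unfolding psi_prime_def PSI by blast
    have I1: "N1 \<in> hyperideals R1" and I2: "N2 \<in> hyperideals R2" using H1 H2 unfolding hyperideals_def by auto
    consider (a) "N1 \<noteq> carrier R1" "N2 \<noteq> carrier R2" | (b) "N1 \<noteq> carrier R1" "N2 = carrier R2"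
      | (c) "N1 = carrier R1" "N2 \<noteq> carrier R2" | (d) "N1 = carrier R1" "N2 = carrier R2" by blast
    then show "?rhs" (is "?A \<or> ?B \<or> ?C")
    proof cases
      case a
      have n1: "hone R1 \<notin> N1" using one_in[OF K1 H1] a by blast
      have n2: "hone R2 \<notin> N2" using one_in[OF K2 H2] a by blast
      have "\<phi>1 N1 = N1"
      proof
        show "\<phi>1 N1 \<subseteq> N1" using assms(5) I1 by blast
        show "N1 \<subseteq> \<phi>1 N1"
        proof
          fix x assume x: "x \<in> N1"
          have xc: "x \<in> carrier R1" using x S1 by blast
          have m: "hmul ?P (x, hone R2) (hone R1, hzero R2) = (x, hzero R2)"
            using kr_mul_one[OF K1 xc] kr_mul_zero[OF K2 o2] by simp
          have "(x, hzero R2) \<in> N" using NN x zero_in[OF K2 H2] by simp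
          with PP'[of "(x, hone R2)" "(hone R1, hzero R2)"] m xc o1 o2 z2 n1 n2 NN
          have "(x, hzero R2) \<in> \<phi>1 N1 \<times> \<phi>2 N2" by auto
          then show "x \<in> \<phi>1 N1" by simp
        qed
      qed
      moreover have "\<phi>2 N2 = N2"
      proof
        show "\<phi>2 N2 \<subseteq> N2" using assms(6) I2 by blast
        show "N2 \<subseteq> \<phi>2 N2"
        proof
          fix x assume x: "x \<in> N2"
          have xc: "x \<in> carrier R2" using x S2 by blast
          have m: "hmul ?P (hone R1, x) (hzero R1, hone R2) = (hzero R1, x)"
            using kr_mul_one[OF K2 xc] kr_mul_zero[OF K1 o1] by simp
          have "(hzero R1, x) \<in> N" using NN x zero_in[OF K1 H1] by simp
          with PP'[of "(hone R1, x)" "(hzero R1, hone R2)"] m xc o1 o2 z1 n1 n2 NN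
          have "(hzero R1, x) \<in> \<phi>1 N1 \<times> \<phi>2 N2" by auto
          then show "x \<in> \<phi>2 N2" by simp
        qed
      qed
      ultimately have ?A using NN I1 I2 a by blast
      then show ?thesis by blast
    next
      case b
      have pp: "x \<in> N1 \<or> y \<in> N1" if "x \<in> carrier R1" "y \<in> carrier R1" "hmul R1 x y \<in> N1"
          "hmul R1 x y \<notin> \<phi>1 N1 \<or> hone R2 \<notin> \<phi>2 N2" for x y
      proof -
        have m: "hmul ?P (x, hone R2) (y, hone R2) = (hmul R1 x y, hone R2)"
          using kr_one_mul[OF K2 o2] by simp
        show ?thesis using PP'[of "(x, hone R2)" "(y, hone R2)"] m that o2 NN b by auto
      qed
      have "psi_prime R1 \<phi>1 N1" unfolding psi_prime_def using H1 pp by blast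
      moreover have "\<phi>2 (carrier R2) \<noteq> carrier R2 \<longrightarrow> prime_hyperideal R1 N1"
        unfolding prime_hyperideal_def using H1 pp one2 b by blast
      ultimately have ?B using NN I1 b by blast
      then show ?thesis by blast
    next
      case c
      have pp: "x \<in> N2 \<or> y \<in> N2" if "x \<in> carrier R2" "y \<in> carrier R2" "hmul R2 x y \<in> N2"
          "hmul R2 x y \<notin> \<phi>2 N2 \<or> hone R1 \<notin> \<phi>1 N1" for x y
      proof -
        have m: "hmul ?P (hone R1, x) (hone R1, y) = (hone R1, hmul R2 x y)"
          using kr_one_mul[OF K1 o1] by simp
        show ?thesis using PP'[of "(hone R1, x)" "(hone R1, y)"] m that o1 NN c by auto
      qed
      have "psi_prime R2 \<phi>2 N2" unfolding psi_prime_def using H2 pp by blast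
      moreover have "\<phi>1 (carrier R1) \<noteq> carrier R1 \<longrightarrow> prime_hyperideal R2 N2"
        unfolding prime_hyperideal_def using H2 pp one1 c by blast
      ultimately have ?C using NN I2 c by blast
      then show ?thesis by blast
    next
      case d
      then show ?thesis using NN assms(8) by simp
    qed
  next
    assume "?rhs"
    then consider (a) N1' N2' where "N = N1' \<times> N2'" "N1' \<in> hyperideals R1" "N1' \<noteq> carrier R1"
        "N2' \<in> hyperideals R2" "N2' \<noteq> carrier R2" "\<phi>1 N1' = N1'" "\<phi>2 N2' = N2'"
      | (b) N1' where "N = N1' \<times> carrier R2" "N1' \<in> hyperideals R1" "N1' \<noteq> carrier R1"
        "psi_prime R1 \<phi>1 N1'" "\<phi>2 (carrier R2) \<noteq> carrier R2 \<longrightarrow> prime_hyperideal R1 N1'"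
      | (c) N2' where "N = carrier R1 \<times> N2'" "N2' \<in> hyperideals R2" "N2' \<noteq> carrier R2"
        "psi_prime R2 \<phi>2 N2'" "\<phi>1 (carrier R1) \<noteq> carrier R1 \<longrightarrow> prime_hyperideal R2 N2'"
      by blast
    then show "psi_prime ?P (phi_prod \<phi>1 \<phi>2) N"
    proof cases
      case a
      have "N1' = N1" "N2' = N2" using a(1) NN ne by (metis fst_image_times snd_image_times)+
      then have "phi_prod \<phi>1 \<phi>2 N = N" using PSI NN a by simp
      then show ?thesis unfolding psi_prime_def using IN by simp
    next
      case b
      have e: "N1' = N1" "carrier R2 = N2" using b(1) NN ne by (metis fst_image_times snd_image_times)+
      show ?thesis unfolding psi_prime_def PSI
      proof (intro conjI IN ballI impI)
        fix u v assume u: "u \<in> carrier ?P" and v: "v \<in> carrier ?P"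
          and in1: "hmul ?P u v \<in> N" and in2: "hmul ?P u v \<notin> \<phi>1 N1 \<times> \<phi>2 N2"
        obtain u1 u2 v1 v2 where uv: "u = (u1, u2)" "v = (v1, v2)" by fastforce
        have c: "u1 \<in> carrier R1" "u2 \<in> carrier R2" "v1 \<in> carrier R1" "v2 \<in> carrier R2"
          using u v uv by auto
        have m1: "hmul R1 u1 v1 \<in> N1'" using in1 uv b(1) by simp
        have m2: "hmul R2 u2 v2 \<in> carrier R2" using kr_mul[OF K2 c(2,4)] .
        have "u1 \<in> N1' \<or> v1 \<in> N1'"
        proof (cases "\<phi>2 (carrier R2) = carrier R2")
          case True
          then have "hmul R1 u1 v1 \<notin> \<phi>1 N1'" using in2 uv e m2 by auto
          then show ?thesis using b(4) c m1 unfolding psi_prime_def by blast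
        next
          case False
          then show ?thesis using b(5) c m1 unfolding prime_hyperideal_def by blast
        qed
        then show "u \<in> N \<or> v \<in> N" using b(1) uv c by auto
      qed
    next
      case c
      have e: "N2' = N2" "carrier R1 = N1" using c(1) NN ne by (metis fst_image_times snd_image_times)+
      show ?thesis unfolding psi_prime_def PSI
      proof (intro conjI IN ballI impI)
        fix u v assume u: "u \<in> carrier ?P" and v: "v \<in> carrier ?P"
          and in1: "hmul ?P u v \<in> N" and in2: "hmul ?P u v \<notin> \<phi>1 N1 \<times> \<phi>2 N2"
        obtain u1 u2 v1 v2 where uv: "u = (u1, u2)" "v = (v1, v2)" by fastforce
        have cc: "u1 \<in> carrier R1" "u2 \<in> carrier R2" "v1 \<in> carrier R1" "v2 \<in> carrier R2"
          using u v uv by auto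
        have m1: "hmul R2 u2 v2 \<in> N2'" using in1 uv c(1) by simp
        have m2: "hmul R1 u1 v1 \<in> carrier R1" using kr_mul[OF K1 cc(1,3)] .
        have "u2 \<in> N2' \<or> v2 \<in> N2'"
        proof (cases "\<phi>1 (carrier R1) = carrier R1")
          case True
          then have "hmul R2 u2 v2 \<notin> \<phi>2 N2'" using in2 uv e m2 by auto
          then show ?thesis using c(4) cc m1 unfolding psi_prime_def by blast
        next
          case False
          then show ?thesis using c(5) cc m1 unfolding prime_hyperideal_def by blast
        qed
        then show "u \<in> N \<or> v \<in> N" using c(1) uv cc by auto
      qed
    qed
  qed
qed

end
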